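(* Let $K$ be a compact convex polytope of dimension $d$ in $\mathbb{R}^d$ with $N$ faces. Then $K$ is a finite intersection $$K=\bigcap_{j=1}^M S_j,$$ where each $S_j$ is either a $d$-dimensional simplex or a strip whose orthogonal cross-section is a lower-dimensional simplex. Moreover, each (codimension-one) face of each $S_j$ contains a face of $K$.
   Context: Faces of $K$ mean faces of codimension $1$. A strip in $\mathbb{R}^d$ is a set $L^{-1}(A)$, where $L\colon\mathbb{R}^d\to\mathbb{R}^j$ is a linear map of rank $j$, $j\in\{1,\dots,d\}$, and $A\subset\mathbb{R}^j$ is a compact convex set of dimension $j$. After an orthogonal change of coordinates the strip is $A\times\mathbb{R}^{d-j}$, and $A$ is its ($j$-dimensional) orthogonal cross-section. "Lower-dimensional" means $j<d$. When $A$ is a simplex, the faces of the strip are the sets $L^{-1}(G)$ with $G$ a facet of $A$. *)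

theory Defs
  imports "HOL-Analysis.Analysis"
begin

text \<open>A lower-dimensional simplicial strip in the Euclidean space 'a, presented by data (L, j, A):
  L is a linear map of rank j (0 < j < DIM('a)); its range, a j-dimensional subspace of 'a,
  plays the role of R^j; A is a j-dimensional simplex inside that range; the strip is the
  preimage of A under L.\<close>
definition simplex_strip_data :: "('a::euclidean_space \<Rightarrow> 'a) \<Rightarrow> nat \<Rightarrow> 'a set \<Rightarrow> bool" where
  "simplex_strip_data L j A \<longleftrightarrow>
     linear L \<and> dim (range L) = j \<and> 1 \<le> j \<and> j < DIM('a) \<and>
     A \<subseteq> range L \<and> (int j) simplex A"

definition strip_faces :: "('a::euclidean_space \<Rightarrow> 'a) \<Rightarrow> 'a set \<Rightarrow> 'a set set" where
  "strip_faces L A = {L -` G | G. G facet_of A}"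

end

theory Submission
  imports Defs
begin


lemma solve_inner:
  fixes B :: "'a::euclidean_space set" and t :: "'a \<Rightarrow> real"
  assumes "independent B"
  shows "\<exists>v \<in> span B. \<forall>n\<in>B. n \<bullet> v = t n"
proof -
  obtain g :: "'a \<Rightarrow> real" where g: "linear g" "\<forall>x\<in>B. g x = t x"
    using linear_independent_extend[OF assms, of t] by blast
  define w where "w = (\<Sum>i\<in>Basis. g i *\<^sub>R i)"
  have gw: "g x = w \<bullet> x" for x
  proof -
    have "g x = g (\<Sum>i\<in>Basis. (x \<bullet> i) *\<^sub>R i)" by (simp add: euclidean_representation)
    also have "\<dots> = (\<Sum>i\<in>Basis. (x \<bullet> i) * g i)"
      using g(1) by (simp add: linear_sum linear_scale)
    also have "\<dots> = w \<bullet> x" unfolding w_def by (simp add: inner_sum_right inner_commute mult.commute)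
    finally show ?thesis .
  qed
  obtain y z where y: "y \<in> span B" and z: "\<And>w'. w' \<in> span B \<Longrightarrow> orthogonal z w'" and wyz: "w = y + z"
    using orthogonal_subspace_decomp_exists by blast
  have "n \<bullet> y = t n" if "n \<in> B" for n
  proof -
    have "orthogonal z n" using z span_base that by blast
    then have "n \<bullet> z = 0" by (simp add: orthogonal_def inner_commute)
    then have "n \<bullet> y = n \<bullet> w" using wyz by (simp add: inner_add_right)
    also have "\<dots> = t n" using gw g(2) that by (simp add: inner_commute)
    finally show ?thesis .
  qed
  then show ?thesis using y by blast
qed


lemma cone_caratheodory:
  fixes N :: "'a::euclidean_space set"
  shows "finite N \<Longrightarrow> (\<forall>n\<in>N. 0 \<le> l n) \<Longrightarrow> z = (\<Sum>n\<in>N. l n *\<^sub>R n) \<Longrightarrow>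
    \<exists>T m. T \<subseteq> N \<and> independent T \<and> (\<forall>n\<in>T. 0 < m n) \<and> z = (\<Sum>n\<in>T. m n *\<^sub>R n)"
proof (induction "card N" arbitrary: N l rule: less_induct)
  case less
  show ?case
  proof (cases "independent N")
    case True
    define T where "T = {n\<in>N. l n > 0}"
    have "T \<subseteq> N" unfolding T_def by auto
    moreover have "independent T" using True \<open>T \<subseteq> N\<close> independent_mono by blast
    moreover have "z = (\<Sum>n\<in>T. l n *\<^sub>R n)"
    proof -
      have "(\<Sum>n\<in>T. l n *\<^sub>R n) = (\<Sum>n\<in>N. l n *\<^sub>R n)"
        apply (rule sum.mono_neutral_left)
        using less.prems \<open>T \<subseteq> N\<close> by (auto simp: T_def less_le)
      then show ?thesis using less.prems by simp
    qed
    ultimately show ?thesis unfolding T_def by blast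
  next
    case False
    then obtain u where u1: "\<exists>v\<in>N. u v \<noteq> 0" and u2: "(\<Sum>v\<in>N. u v *\<^sub>R v) = 0"
      using dependent_finite[OF less.prems(1)] by blast
    define u' where "u' = (if \<exists>v\<in>N. u v > 0 then u else (\<lambda>v. - u v))"
    have u'1: "\<exists>v\<in>N. u' v > 0"
      using u1 unfolding u'_def by (auto simp: neq_iff)
    have u'2: "(\<Sum>v\<in>N. u' v *\<^sub>R v) = 0"
      using u2 unfolding u'_def by (auto simp: sum_negf)
    define P where "P = {n\<in>N. u' n > 0}"
    have Pfin: "finite P" and Pne: "P \<noteq> {}" using less.prems(1) u'1 unfolding P_def by auto
    define t where "t = Min ((\<lambda>n. l n / u' n) ` P)"
    obtain n0 where n0: "n0 \<in> P" "t = l n0 / u' n0"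
    proof -
      have "t \<in> (\<lambda>n. l n / u' n) ` P" unfolding t_def using Pfin Pne by (intro Min_in) auto
      then show ?thesis using that by blast
    qed
    have tle: "t \<le> l n / u' n" if "n \<in> P" for n
      unfolding t_def using Pfin that by auto
    have t0: "0 \<le> t" using n0 less.prems(2) unfolding P_def by auto
    define l' where "l' n = l n - t * u' n" for n
    have l'0: "0 \<le> l' n" if "n \<in> N" for n
    proof (cases "n \<in> P")
      case True
      then have "u' n > 0" unfolding P_def by auto
      then show ?thesis using tle[OF True] unfolding l'_def by (simp add: field_simps)
    next
      case False
      then have "u' n \<le> 0" using that unfolding P_def by auto
      then show ?thesis using t0 less.prems(2) that unfolding l'_def
        by (smt (verit, best) mult_nonneg_nonpos)
    qed
    have l'n0: "l' n0 = 0" using n0 unfolding l'_def P_def by auto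
    have "z = (\<Sum>n\<in>N. l' n *\<^sub>R n)"
    proof -
      have "(\<Sum>n\<in>N. l' n *\<^sub>R n) = (\<Sum>n\<in>N. l n *\<^sub>R n) - t *\<^sub>R (\<Sum>n\<in>N. u' n *\<^sub>R n)"
        unfolding l'_def by (simp add: scaleR_diff_left sum_subtractf scaleR_sum_right)
      then show ?thesis using u'2 less.prems(3) by simp
    qed
    also have "\<dots> = (\<Sum>n\<in>N - {n0}. l' n *\<^sub>R n)"
      using sum.remove[OF less.prems(1), of n0 "\<lambda>n. l' n *\<^sub>R n"] n0(1) l'n0 unfolding P_def by auto
    finally have zz: "z = (\<Sum>n\<in>N - {n0}. l' n *\<^sub>R n)" .
    have "card (N - {n0}) < card N"
      by (rule card_Diff1_less[OF less.prems(1)]) (use n0(1) P_def in auto)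
    from less.hyps[OF this _ _ zz] l'0 less.prems(1)
    obtain T m where "T \<subseteq> N - {n0}" "independent T" "\<forall>n\<in>T. 0 < m n" "z = (\<Sum>n\<in>T. m n *\<^sub>R n)"
      by auto
    then show ?thesis by blast
  qed
qed


lemma proj_exists:
  fixes V :: "'a::euclidean_space set"
  assumes "subspace V"
  obtains L where "linear L" "range L = V" "\<And>x. L x \<in> V"
    "\<And>x a. a \<in> V \<Longrightarrow> a \<bullet> L x = a \<bullet> x"
proof -
  obtain E where E: "E \<subseteq> V" "pairwise orthogonal E" "\<And>x. x \<in> E \<Longrightarrow> norm x = 1"
    "independent E" "card E = dim V" "span E = V"
    using orthonormal_basis_subspace[OF assms] by blast
  have finE: "finite E" using E(4) independent_bound by blast
  define L where "L x = (\<Sum>e\<in>E. (e \<bullet> x) *\<^sub>R e)" for x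
  have lin: "linear L"
    unfolding L_def by (auto simp: linear_iff inner_add_right scaleR_add_left sum.distrib scaleR_sum_right)
  have LV: "L x \<in> V" for x
  proof -
    have "(\<Sum>e\<in>E. (e \<bullet> x) *\<^sub>R e) \<in> span E"
      by (intro span_sum span_scale) (auto intro: span_base)
    then show ?thesis unfolding L_def using E(6) by simp
  qed
  have eL: "e \<bullet> L x = e \<bullet> x" if "e \<in> E" for e x
  proof -
    have "e \<bullet> L x = (\<Sum>e'\<in>E. (e' \<bullet> x) * (e \<bullet> e'))"
      unfolding L_def by (simp add: inner_sum_right)
    also have "\<dots> = (e \<bullet> x) * (e \<bullet> e) + (\<Sum>e'\<in>E - {e}. (e' \<bullet> x) * (e \<bullet> e'))"
      using sum.remove[OF finE that] by blast
    also have "(\<Sum>e'\<in>E - {e}. (e' \<bullet> x) * (e \<bullet> e')) = 0"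
      using E(2) that by (intro sum.neutral) (auto simp: pairwise_def orthogonal_def)
    also have "e \<bullet> e = 1" using E(3)[OF that] by (simp add: norm_eq_1)
    finally show ?thesis by simp
  qed
  have aL: "a \<bullet> L x = a \<bullet> x" if "a \<in> V" for a x
  proof -
    have "orthogonal (x - L x) a"
      by (rule orthogonal_to_span[of a E]) (use that E(6) eL in \<open>auto simp: orthogonal_def inner_diff_left inner_diff_right inner_commute\<close>)
    then show ?thesis by (simp add: orthogonal_def inner_diff_left inner_diff_right inner_commute)
  qed
  have Lfix: "L y = y" if "y \<in> V" for y
  proof -
    have "y - L y \<in> V" using that LV assms subspace_diff by blast
    then have "(y - L y) \<bullet> (y - L y) = 0"
      using aL[OF \<open>y - L y \<in> V\<close>, of y] by (simp add: inner_diff_right)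
    then show ?thesis by simp
  qed
  have "range L = V" using LV Lfix by (metis image_subset_iff subsetI subset_antisym rangeI)
  then show ?thesis using that lin LV aL by blast
qed


lemma circuit_core:
  fixes a :: "'i \<Rightarrow> 'a::euclidean_space" and b :: "'i \<Rightarrow> real"
  assumes finJ: "finite J" and h0J: "h0 \<in> J"
    and mupos: "\<forall>h\<in>J. 0 < \<mu> h" and musum: "(\<Sum>h\<in>J. \<mu> h *\<^sub>R a h) = 0"
    and inj: "inj_on a (J - {h0})" and ind: "independent (a ` (J - {h0}))"
    and anz: "a h0 \<noteq> 0"
    and x0: "\<forall>h\<in>J. a h \<bullet> x0 < b h"
    and Sdef: "S = {x. \<forall>h\<in>J. a h \<bullet> x \<le> b h}"
  shows "((int DIM('a)) simplex S \<and> (\<forall>F. F facet_of S \<longrightarrow> (\<exists>h\<in>J. {x\<in>S. a h \<bullet> x = b h} \<subseteq> F)))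
        \<or> (\<exists>L j A. simplex_strip_data L j A \<and> S = L -` A \<and>
              (\<forall>F\<in>strip_faces L A. \<exists>h\<in>J. {x\<in>S. a h \<bullet> x = b h} \<subseteq> F))"
proof -
  define T where "T = J - {h0}"
  define B where "B = a ` T"
  define m where "m = card T"
  define V where "V = span B"
  have finT: "finite T" using finJ T_def by auto
  have cardB: "card B = m" unfolding B_def m_def using card_image inj T_def by blast
  have dimV: "dim V = m" unfolding V_def using dim_span_eq_card_independent ind cardB B_def T_def by metis
  have subV: "subspace V" unfolding V_def by simp
  have J_eq: "J = insert h0 T" using h0J T_def by auto
  have h0T: "h0 \<notin> T" using T_def by auto
  have sumJ: "(\<Sum>h\<in>J. f h) = f h0 + (\<Sum>h\<in>T. f h)" for f :: "'i \<Rightarrow> 'b::comm_monoid_add"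
    using J_eq h0T finT by simp
  have aT: "a h \<in> V" if "h \<in> T" for h
    unfolding V_def B_def using that by (auto intro: span_base)
  have ah0: "\<mu> h0 *\<^sub>R a h0 = - (\<Sum>h\<in>T. \<mu> h *\<^sub>R a h)"
    using musum sumJ[of "\<lambda>h. \<mu> h *\<^sub>R a h"] by (simp add: eq_neg_iff_add_eq_0)
  have aV: "a h \<in> V" if "h \<in> J" for h
  proof (cases "h = h0")
    case True
    have "- (\<Sum>h\<in>T. \<mu> h *\<^sub>R a h) \<in> V"
      using aT subV by (intro subspace_neg subspace_sum subspace_scale) auto
    then have "(1 / \<mu> h0) *\<^sub>R (\<mu> h0 *\<^sub>R a h0) \<in> V"
      using ah0 subV subspace_scale by metis
    moreover have "\<mu> h0 \<noteq> 0" using mupos h0J by auto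
    ultimately show ?thesis using True by simp
  next
    case False then show ?thesis using that aT T_def by auto
  qed
  have Tne: "T \<noteq> {}"
  proof
    assume "T = {}"
    then have "\<mu> h0 *\<^sub>R a h0 = 0" using ah0 by simp
    moreover have "\<mu> h0 > 0" using mupos h0J by auto
    ultimately show False using anz by simp
  qed
  have m1: "1 \<le> m" unfolding m_def using Tne finT by (simp add: Suc_le_eq card_gt_0_iff)
  have mle: "m \<le> DIM('a)" using independent_bound[OF ind] cardB B_def T_def by simp
  define c where "c = (\<Sum>h\<in>J. \<mu> h * b h)"
  have slacksum: "(\<Sum>h\<in>J. \<mu> h * (b h - a h \<bullet> y)) = c" for y
  proof -
    have "(\<Sum>h\<in>J. \<mu> h * (a h \<bullet> y)) = (\<Sum>h\<in>J. \<mu> h *\<^sub>R a h) \<bullet> y"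
      by (simp add: inner_sum_left)
    then show ?thesis unfolding c_def using musum by (simp add: right_diff_distrib sum_subtractf)
  qed
  have cpos: "c > 0"
  proof -
    have "(\<Sum>h\<in>J. \<mu> h * (b h - a h \<bullet> x0)) > 0"
      using finJ h0J mupos x0 by (intro sum_pos) auto
    then show ?thesis using slacksum by simp
  qed
  have vex: "\<exists>v\<in>V. \<forall>k\<in>J. b k - a k \<bullet> v = (if k = l then c / \<mu> l else 0)" if lJ: "l \<in> J" for l
  proof -
    define t where "t n = b (inv_into T a n) - (if inv_into T a n = l then c / \<mu> l else 0)" for n
    obtain v where vV: "v \<in> V" and vt: "\<forall>n\<in>B. n \<bullet> v = t n"
      using solve_inner[OF ind[folded T_def, folded B_def], of t] V_def by blast
    have vT: "b k - a k \<bullet> v = (if k = l then c / \<mu> l else 0)" if "k \<in> T" for k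
    proof -
      have "inv_into T a (a k) = k" using inj T_def that inv_into_f_f by metis
      then show ?thesis using vt that B_def t_def by auto
    qed
    have "\<mu> h0 * (b h0 - a h0 \<bullet> v) + (\<Sum>k\<in>T. \<mu> k * (b k - a k \<bullet> v)) = c"
      using slacksum[of v] sumJ[of "\<lambda>k. \<mu> k * (b k - a k \<bullet> v)"] by simp
    moreover have "(\<Sum>k\<in>T. \<mu> k * (b k - a k \<bullet> v)) = (\<Sum>k\<in>T. (if k = l then c else 0))"
      using vT mupos T_def by (intro sum.cong) auto
    moreover have "(\<Sum>k\<in>T. (if k = l then c else 0)) = (if l \<in> T then c else 0)"
      using finT by simp
    ultimately have "\<mu> h0 * (b h0 - a h0 \<bullet> v) = (if l = h0 then c else 0)"
      using lJ T_def by auto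
    then have "b h0 - a h0 \<bullet> v = (if h0 = l then c / \<mu> h0 else 0)"
      using mupos h0J by (auto simp: field_simps)
    then have "b k - a k \<bullet> v = (if k = l then c / \<mu> l else 0)" if "k \<in> J" for k
      using vT that T_def by (cases "k = h0") auto
    then show ?thesis using vV by blast
  qed
  then obtain v where vV: "\<And>l. l \<in> J \<Longrightarrow> v l \<in> V"
    and vs: "\<And>l k. l \<in> J \<Longrightarrow> k \<in> J \<Longrightarrow> b k - a k \<bullet> v l = (if k = l then c / \<mu> l else 0)"
    by metis
  have vS: "v l \<in> S" if "l \<in> J" for l
    using vs[OF that] mupos cpos unfolding Sdef
    by (auto simp: split: if_splits) (smt (verit) divide_pos_pos vs[OF that])
  have injv: "inj_on v J"
  proof (rule inj_onI)
    fix l l' assume "l \<in> J" "l' \<in> J" "v l = v l'"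
    then show "l = l'" using vs[of l l] vs[of l' l] mupos cpos
      by (metis divide_pos_pos less_irrefl)
  qed
  have rep: "y \<in> convex hull (v ` J')"
    if yV: "y \<in> V" and yS: "y \<in> S" and J'J: "J' \<subseteq> J" and zer: "\<forall>l\<in>J - J'. a l \<bullet> y = b l" for y J'
  proof -
    define lam where "lam l = \<mu> l * (b l - a l \<bullet> y) / c" for l
    have lam0: "lam l \<ge> 0" if "l \<in> J" for l
      using that yS mupos cpos unfolding lam_def Sdef by auto
    have lamz: "lam l = 0" if "l \<in> J - J'" for l using zer that unfolding lam_def by auto
    have lamsum: "(\<Sum>l\<in>J. lam l) = 1"
      unfolding lam_def using slacksum[of y] cpos by (simp add: sum_divide_distrib[symmetric])
    define z where "z = (\<Sum>l\<in>J. lam l *\<^sub>R v l)"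
    have zV: "z \<in> V" unfolding z_def using vV subV by (intro subspace_sum subspace_scale) auto
    have az: "a k \<bullet> z = a k \<bullet> y" if kJ: "k \<in> J" for k
    proof -
      have "a k \<bullet> z = (\<Sum>l\<in>J. lam l * (a k \<bullet> v l))" unfolding z_def by (simp add: inner_sum_right)
      also have "\<dots> = (\<Sum>l\<in>J. lam l * b k - (if l = k then lam l * (c / \<mu> l) else 0))"
      proof (rule sum.cong[OF refl])
        fix l assume lJ: "l \<in> J"
        have "a k \<bullet> v l = b k - (if k = l then c / \<mu> l else 0)" using vs[OF lJ kJ] by linarith
        then show "lam l * (a k \<bullet> v l) = lam l * b k - (if l = k then lam l * (c / \<mu> l) else 0)"
          by (cases "l = k") (simp_all add: right_diff_distrib)
      qed
      also have "\<dots> = b k - lam k * (c / \<mu> k)"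
        using finJ kJ lamsum by (simp add: sum_subtractf sum_distrib_right[symmetric])
      also have "\<dots> = a k \<bullet> y"
      proof -
        have "\<mu> k > 0" using mupos kJ by auto
        then show ?thesis unfolding lam_def using cpos by (simp add: field_simps)
      qed
      finally show ?thesis .
    qed
    have "z - y \<in> V" using zV yV subV subspace_diff by blast
    have "orthogonal (z - y) w" if "w \<in> V" for w
    proof (rule orthogonal_to_span[of w B])
      show "w \<in> span B" using that V_def by simp
      fix n assume "n \<in> B"
      then obtain k where "k \<in> J" "n = a k" unfolding B_def T_def by auto
      then show "orthogonal (z - y) n" using az[of k] by (simp add: orthogonal_def inner_diff_left inner_diff_right inner_commute)
    qed
    then have "(z - y) \<bullet> (z - y) = 0" using \<open>z - y \<in> V\<close> by (simp add: orthogonal_def)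
    then have zy: "z = y" by simp
    have finJ': "finite J'" using J'J finJ finite_subset by blast
    have "z = (\<Sum>l\<in>J'. lam l *\<^sub>R v l)"
      unfolding z_def using lamz J'J finJ by (intro sum.mono_neutral_right) auto
    moreover have "(\<Sum>l\<in>J'. lam l) = 1"
    proof -
      have "(\<Sum>l\<in>J'. lam l) = (\<Sum>l\<in>J. lam l)"
        by (rule sum.mono_neutral_left[OF finJ J'J]) (use lamz in auto)
      then show ?thesis using lamsum by simp
    qed
    ultimately have "z \<in> convex hull (v ` J')"
    proof -
      assume z': "z = (\<Sum>l\<in>J'. lam l *\<^sub>R v l)" and s1: "(\<Sum>l\<in>J'. lam l) = 1"
      have "(\<Sum>l\<in>J'. lam l *\<^sub>R v l) \<in> convex hull (v ` J')"
        by (rule convex_sum[OF finJ' convex_convex_hull s1]) (use lam0 J'J in \<open>auto intro: hull_inc\<close>)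
      then show ?thesis using z' by simp
    qed
    then show ?thesis using zy by simp
  qed
  define A where "A = V \<inter> S"
  define C where "C = v ` J"
  have convS: "convex S"
  proof -
    have "S = (\<Inter>h\<in>J. {x. a h \<bullet> x \<le> b h})" unfolding Sdef by auto
    then show ?thesis by (simp add: convex_INT convex_halfspace_le)
  qed
  have AC: "A = convex hull C"
  proof
    show "A \<subseteq> convex hull C" unfolding A_def C_def using rep[of _ J] by auto
    show "convex hull C \<subseteq> A"
      unfolding A_def C_def using vV vS convS subV
      by (intro hull_minimal) (auto intro: convex_Int subspace_imp_convex)
  qed
  have cardC: "card C = m + 1"
    unfolding C_def m_def using card_image[OF injv] J_eq finT h0T by simp
  have finC: "finite C" unfolding C_def using finJ by simp
  have indC: "\<not> affine_dependent C"
  proof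
    assume "affine_dependent C"
    then obtain U where U1: "sum U C = 0" and U2: "\<exists>w\<in>C. U w \<noteq> 0" and U3: "(\<Sum>w\<in>C. U w *\<^sub>R w) = 0"
      using affine_dependent_explicit_finite[OF finC] by blast
    obtain k where kJ: "k \<in> J" and Uk: "U (v k) \<noteq> 0" using U2 C_def by auto
    have "(\<Sum>w\<in>C. U w * (b k - a k \<bullet> w)) = b k * sum U C - a k \<bullet> (\<Sum>w\<in>C. U w *\<^sub>R w)"
      by (simp add: algebra_simps sum_subtractf sum_distrib_left inner_sum_right)
    also have "\<dots> = 0" using U1 U3 by simp
    finally have "(\<Sum>w\<in>C. U w * (b k - a k \<bullet> w)) = 0" .
    moreover have "(\<Sum>w\<in>C. U w * (b k - a k \<bullet> w)) = (\<Sum>l\<in>J. U (v l) * (b k - a k \<bullet> v l))"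
      unfolding C_def by (rule sum.reindex[OF injv, unfolded comp_def])
    moreover have "\<dots> = (\<Sum>l\<in>J. if l = k then U (v k) * (c / \<mu> k) else 0)"
      using vs kJ by (intro sum.cong) auto
    moreover have "\<dots> = U (v k) * (c / \<mu> k)" using finJ kJ by simp
    ultimately show False using Uk cpos mupos kJ by auto
  qed
  have simpA: "int m simplex A"
    unfolding AC using indC cardC by (intro simplex_convex_hull) simp
  have facA: "\<exists>l\<in>J. F = convex hull (v ` (J - {l}))" if Ffac: "F facet_of A" for F
  proof -
    obtain u where "u \<in> C" "F = convex hull (C - {u})"
      using Ffac facet_of_convex_hull_affine_independent[OF indC] AC by auto
    then obtain l where lJ: "l \<in> J" and ul: "u = v l" unfolding C_def by blast
    have "C - {v l} = v ` (J - {l})"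
      unfolding C_def using inj_on_image_set_diff[OF injv, of J "{l}"] lJ by simp
    then have "F = convex hull (v ` (J - {l}))" using \<open>F = convex hull (C - {u})\<close> ul by simp
    then show ?thesis using lJ by blast
  qed
  show ?thesis
  proof (cases "m = DIM('a)")
    case True
    then have "span V = UNIV" using dimV dim_eq_full by metis
    then have VU: "V = UNIV" using V_def by (metis span_span)
    then have AS: "A = S" unfolding A_def by simp
    have "(\<forall>F. F facet_of S \<longrightarrow> (\<exists>h\<in>J. {x\<in>S. a h \<bullet> x = b h} \<subseteq> F))"
    proof (intro allI impI)
      fix F assume "F facet_of S"
      then obtain l where lJ: "l \<in> J" and Fl: "F = convex hull (v ` (J - {l}))" using facA AS by auto
      have "x \<in> F" if "x \<in> S" "a l \<bullet> x = b l" for x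
      proof -
        have "\<forall>l'\<in>J - (J - {l}). a l' \<bullet> x = b l'" using that lJ by blast
        then show ?thesis unfolding Fl using rep[of x "J - {l}"] VU that by blast
      qed
      then have "{x\<in>S. a l \<bullet> x = b l} \<subseteq> F" by blast
      then show "\<exists>h\<in>J. {x\<in>S. a h \<bullet> x = b h} \<subseteq> F" using lJ by blast
    qed
    moreover have "int DIM('a) simplex S" using simpA AS True by simp
    ultimately show ?thesis by blast
  next
    case False
    then have mlt: "m < DIM('a)" using mle by simp
    obtain L where Llin: "linear L" and Lr: "range L = V" and LV: "\<And>x. L x \<in> V"
      and aL: "\<And>x w. w \<in> V \<Longrightarrow> w \<bullet> L x = w \<bullet> x"
      using proj_exists[OF subV] by blast
    have sd: "simplex_strip_data L m A"
    proof -
      have "A \<subseteq> range L" using Lr A_def by blast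
      then show ?thesis unfolding simplex_strip_data_def using Llin Lr dimV m1 mlt simpA by simp
    qed
    have SL: "S = L -` A"
    proof -
      have "(L x \<in> S) = (x \<in> S)" for x unfolding Sdef using aL aV by simp
      then show ?thesis unfolding A_def using LV by blast
    qed
    have "\<forall>F\<in>strip_faces L A. \<exists>h\<in>J. {x\<in>S. a h \<bullet> x = b h} \<subseteq> F"
    proof
      fix F assume "F \<in> strip_faces L A"
      then obtain G where G: "G facet_of A" "F = L -` G" unfolding strip_faces_def by auto
      then obtain l where lJ: "l \<in> J" and Gl: "G = convex hull (v ` (J - {l}))" using facA by auto
      have "L x \<in> G" if "x \<in> S" "a l \<bullet> x = b l" for x
      proof -
        have "L x \<in> A" using that SL by blast
        then have LxS: "L x \<in> S" using A_def by blast
        have "a l \<bullet> L x = b l" using aL aV lJ that by simp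
        then have "\<forall>l'\<in>J - (J - {l}). a l' \<bullet> L x = b l'" using lJ by blast
        then show ?thesis unfolding Gl using rep[of "L x" "J - {l}"] LV LxS by blast
      qed
      then have "{x\<in>S. a l \<bullet> x = b l} \<subseteq> F" using G(2) by blast
      then show "\<exists>h\<in>J. {x\<in>S. a h \<bullet> x = b h} \<subseteq> F" using lJ by blast
    qed
    then show ?thesis using sd SL by blast
  qed
qed


lemma neg_in_cone:
  fixes a :: "'i \<Rightarrow> 'a::euclidean_space"
  assumes finF: "finite F" and h0F: "h0 \<in> F"
    and Kdef: "\<And>x. x \<in> K \<longleftrightarrow> (\<forall>h\<in>F. a h \<bullet> x \<le> b h)"
    and bdd: "bounded K" and x0: "x0 \<in> K"
  shows "- a h0 \<in> convex_cone hull (a ` F)"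
proof (rule ccontr)
  define Q where "Q = convex_cone hull (a ` F)"
  assume "- a h0 \<notin> convex_cone hull (a ` F)"
  then have nQ: "- a h0 \<notin> Q" unfolding Q_def .
  have "closed Q" unfolding Q_def using finF by (simp add: closed_convex_cone_hull)
  moreover have "convex Q" unfolding Q_def by (simp add: convex_convex_cone_hull)
  ultimately obtain w \<beta> where w1: "w \<bullet> (- a h0) < \<beta>" and w2: "\<forall>x\<in>Q. \<beta> < w \<bullet> x"
    using separating_hyperplane_closed_point[OF _ _ nQ] by blast
  have "0 \<in> Q" unfolding Q_def by (simp add: convex_cone_hull_contains_0)
  then have \<beta>neg: "\<beta> < 0" using w2 by force
  have wa: "0 \<le> w \<bullet> a h" if hF: "h \<in> F" for h
  proof (rule ccontr)
    assume "\<not> 0 \<le> w \<bullet> a h"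
    then have neg: "w \<bullet> a h < 0" by simp
    define t where "t = \<beta> / (w \<bullet> a h)"
    have t0: "0 \<le> t" unfolding t_def using neg \<beta>neg by (simp add: divide_nonpos_neg)
    have "a h \<in> Q" unfolding Q_def using hF by (simp add: hull_inc)
    then have "t *\<^sub>R a h \<in> Q" unfolding Q_def using t0 convex_cone_hull_mul by blast
    then have "\<beta> < w \<bullet> (t *\<^sub>R a h)" using w2 by blast
    moreover have "w \<bullet> (t *\<^sub>R a h) = \<beta>" unfolding t_def using neg by simp
    ultimately show False by simp
  qed
  have "w \<bullet> a h0 > 0" using w1 \<beta>neg by simp
  then have wnz: "w \<noteq> 0" by auto
  have inK: "x0 - t *\<^sub>R w \<in> K" if "0 \<le> t" for t
  proof -
    have "a h \<bullet> (x0 - t *\<^sub>R w) \<le> b h" if hF: "h \<in> F" for h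
    proof -
      have "a h \<bullet> (x0 - t *\<^sub>R w) = a h \<bullet> x0 - t * (w \<bullet> a h)"
        by (simp add: inner_diff_right inner_commute)
      also have "\<dots> \<le> a h \<bullet> x0" using wa[OF hF] \<open>0 \<le> t\<close> by simp
      also have "\<dots> \<le> b h" using x0 Kdef hF by blast
      finally show ?thesis .
    qed
    then show ?thesis using Kdef by blast
  qed
  obtain B where Bpos: "B > 0" and Bb: "\<forall>x\<in>K. norm x \<le> B" using bdd bounded_pos by blast
  define t where "t = (B + norm x0 + 1) / norm w"
  have t0: "0 \<le> t" unfolding t_def using Bpos by simp
  have "norm (t *\<^sub>R w) = B + norm x0 + 1" unfolding t_def using wnz Bpos by simp
  moreover have "norm (t *\<^sub>R w) \<le> norm (x0 - t *\<^sub>R w) + norm x0"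
    by (metis add.commute norm_minus_commute norm_triangle_sub)
  moreover have "norm (x0 - t *\<^sub>R w) \<le> B" using Bb inK[OF t0] by blast
  ultimately show False by linarith
qed


theorem theorem4p5:
  fixes K :: "'a::euclidean_space set"
  assumes "polytope K" and "aff_dim K = int DIM('a)"
  shows "\<exists>\<S>. finite \<S> \<and> K = \<Inter>\<S> \<and>
           (\<forall>S\<in>\<S>.
              ((int DIM('a)) simplex S \<and>
                 (\<forall>F. F facet_of S \<longrightarrow> (\<exists>G. G facet_of K \<and> G \<subseteq> F)))
            \<or> (\<exists>L j A. simplex_strip_data L j A \<and> S = L -` A \<and>
                 (\<forall>F\<in>strip_faces L A. \<exists>G. G facet_of K \<and> G \<subseteq> F)))"
proof -
  have polyK: "polyhedron K" using assms(1) polytope_imp_polyhedron by blast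
  have bddK: "bounded K" using assms(1) polytope_imp_bounded by blast
  have convK: "convex K" using assms(1) polytope_imp_convex by blast
  have ahK: "affine hull K = UNIV" using assms(2) aff_dim_eq_full by blast
  obtain \<F> where finF: "finite \<F>" and seq: "K = affine hull K \<inter> \<Inter>\<F>"
    and hs: "\<forall>h\<in>\<F>. \<exists>a b. a \<noteq> 0 \<and> h = {x. a \<bullet> x \<le> b}"
    and min: "\<forall>F'. F' \<subset> \<F> \<longrightarrow> K \<subset> affine hull K \<inter> \<Inter>F'"
    using polyK polyhedron_Int_affine_minimal by metis
  obtain a b where ab: "\<And>h. h \<in> \<F> \<Longrightarrow> a h \<noteq> 0 \<and> h = {x. a h \<bullet> x \<le> b h}"
    using hs by metis
  have facK: "K \<inter> {x. a h \<bullet> x = b h} facet_of K" if "h \<in> \<F>" for h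
    using facet_of_polyhedron_explicit[OF finF seq ab] min that by blast
  have Kdef: "x \<in> K \<longleftrightarrow> (\<forall>h\<in>\<F>. a h \<bullet> x \<le> b h)" for x
  proof -
    have "K = \<Inter>\<F>" using seq ahK by simp
    then show ?thesis using ab by auto
  qed
  have "K \<noteq> {}" using assms(2) by auto
  then have "rel_interior K \<noteq> {}" using convK rel_interior_eq_empty by blast
  then obtain x0 where "x0 \<in> interior K" using interior_rel_interior_gen[of K] assms(2) by auto
  then obtain \<epsilon> where \<epsilon>: "\<epsilon> > 0" "cball x0 \<epsilon> \<subseteq> K" using mem_interior_cball by blast
  have x0K: "x0 \<in> K" using \<epsilon> by auto
  have x0s: "a h \<bullet> x0 < b h" if hF: "h \<in> \<F>" for h
  proof -
    have anz: "a h \<noteq> 0" using ab hF by blast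
    define y where "y = x0 + (\<epsilon> / norm (a h)) *\<^sub>R a h"
    have "dist x0 y = \<epsilon>" unfolding y_def dist_norm using anz \<epsilon>(1) by simp
    then have "y \<in> K" using \<epsilon>(2) by auto
    then have "a h \<bullet> y \<le> b h" using Kdef hF by blast
    moreover have "a h \<bullet> y = a h \<bullet> x0 + \<epsilon> * norm (a h)"
      unfolding y_def using anz by (simp add: inner_add_right power2_norm_eq_inner[symmetric] power2_eq_square)
    moreover have "\<epsilon> * norm (a h) > 0" using anz \<epsilon>(1) by simp
    ultimately show ?thesis by linarith
  qed
  define P where "P S \<longleftrightarrow>
              ((int DIM('a)) simplex S \<and>
                 (\<forall>F. F facet_of S \<longrightarrow> (\<exists>G. G facet_of K \<and> G \<subseteq> F)))
            \<or> (\<exists>L j A. simplex_strip_data L j A \<and> S = L -` A \<and>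
                 (\<forall>F\<in>strip_faces L A. \<exists>G. G facet_of K \<and> G \<subseteq> F))" for S
  have main: "\<exists>S. K \<subseteq> S \<and> S \<subseteq> {x. a h0 \<bullet> x \<le> b h0} \<and> P S" if h0F: "h0 \<in> \<F>" for h0
  proof -
    have anz: "a h0 \<noteq> 0" using ab h0F by blast
    have "- a h0 \<in> convex_cone hull (a ` \<F>)"
      using neg_in_cone[OF finF h0F _ bddK x0K] Kdef by blast
    moreover have "a ` \<F> \<noteq> {}" using h0F by blast
    ultimately have "- a h0 \<in> (\<Union>x \<in> convex hull (a ` \<F>). \<Union>c\<in>{0..}. {c *\<^sub>R x})"
      using convex_cone_hull_convex_hull_nonempty by metis
    then obtain y c where y: "y \<in> convex hull (a ` \<F>)" and c: "c \<ge> 0" and yc: "- a h0 = c *\<^sub>R y"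
      by blast
    obtain u where u0: "\<forall>n\<in>a ` \<F>. 0 \<le> u n" and uy: "(\<Sum>n\<in>a ` \<F>. u n *\<^sub>R n) = y"
      using y convex_hull_finite[of "a ` \<F>"] finF by auto
    have "- a h0 = (\<Sum>n\<in>a ` \<F>. (c * u n) *\<^sub>R n)"
      using yc uy[symmetric] by (simp add: scaleR_sum_right)
    moreover have "\<forall>n\<in>a ` \<F>. 0 \<le> c * u n" using u0 c by simp
    ultimately obtain T m where TF: "T \<subseteq> a ` \<F>" and indT: "independent T"
      and mpos: "\<forall>n\<in>T. 0 < m n" and Tsum: "- a h0 = (\<Sum>n\<in>T. m n *\<^sub>R n)"
      using cone_caratheodory[of "a ` \<F>" "\<lambda>n. c * u n" "- a h0"] finF by blast
    have finT: "finite T" using indT independent_bound by blast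
    have h0T: "a h0 \<notin> T"
    proof
      assume h0T: "a h0 \<in> T"
      define m' where "m' n = m n + (if n = a h0 then 1 else 0)" for n
      have "(\<Sum>n\<in>T. m' n *\<^sub>R n) = (\<Sum>n\<in>T. m n *\<^sub>R n) + (\<Sum>n\<in>T. (if n = a h0 then 1 else 0) *\<^sub>R n)"
        unfolding m'_def by (simp add: scaleR_add_left sum.distrib)
      also have "(\<Sum>n\<in>T. (if n = a h0 then 1 else 0) *\<^sub>R n) = a h0"
        using finT h0T by (simp add: if_distrib[of "\<lambda>r. r *\<^sub>R _"] sum.delta cong: if_cong)
      finally have "(\<Sum>n\<in>T. m' n *\<^sub>R n) = 0" using Tsum[symmetric] by simp
      moreover have "m' (a h0) \<noteq> 0" using mpos h0T unfolding m'_def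
        by (smt (verit))
      ultimately have "dependent T" using dependent_finite[OF finT] h0T by blast
      then show False using indT by blast
    qed
    define hs where "hs n = inv_into \<F> a n" for n
    have hsF: "hs n \<in> \<F>" and ahs: "a (hs n) = n" if "n \<in> T" for n
      using TF that unfolding hs_def by (auto intro: inv_into_into f_inv_into_f)
    have injhs: "inj_on hs T" using ahs by (metis inj_onI)
    define J where "J = insert h0 (hs ` T)"
    define \<mu> where "\<mu> h = (if h = h0 then 1 else m (a h))" for h
    have h0hs: "h0 \<notin> hs ` T" using ahs h0T by auto
    have finJ: "finite J" unfolding J_def using finT by simp
    have JF: "J \<subseteq> \<F>" unfolding J_def using h0F hsF by auto
    have mupos: "\<forall>h\<in>J. 0 < \<mu> h"
      unfolding J_def \<mu>_def using h0hs ahs mpos by auto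
    have musum: "(\<Sum>h\<in>J. \<mu> h *\<^sub>R a h) = 0"
    proof -
      have "(\<Sum>h\<in>J. \<mu> h *\<^sub>R a h) = a h0 + (\<Sum>h\<in>hs ` T. \<mu> h *\<^sub>R a h)"
        unfolding J_def using h0hs finT by (simp add: \<mu>_def)
      also have "(\<Sum>h\<in>hs ` T. \<mu> h *\<^sub>R a h) = (\<Sum>n\<in>T. \<mu> (hs n) *\<^sub>R a (hs n))"
        using sum.reindex[OF injhs] by (simp add: comp_def)
      also have "\<dots> = (\<Sum>n\<in>T. m n *\<^sub>R n)"
        using ahs h0hs by (intro sum.cong refl) (auto simp: \<mu>_def)
      finally show ?thesis using Tsum[symmetric] by simp
    qed
    have Jh0: "J - {h0} = hs ` T" unfolding J_def using h0hs by auto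
    have injJ: "inj_on a (J - {h0})" unfolding Jh0 using ahs by (metis (no_types, lifting) image_iff inj_onI)
    have aJ: "a ` (J - {h0}) = T" unfolding Jh0 using ahs by (force simp: image_comp)
    have indJ: "independent (a ` (J - {h0}))" using aJ indT by simp
    have x0J: "\<forall>h\<in>J. a h \<bullet> x0 < b h" using x0s JF by blast
    define S where "S = {x. \<forall>h\<in>J. a h \<bullet> x \<le> b h}"
    have KS: "K \<subseteq> S" unfolding S_def using Kdef JF by blast
    have Sh0: "S \<subseteq> {x. a h0 \<bullet> x \<le> b h0}" unfolding S_def J_def by auto
    have core: "((int DIM('a)) simplex S \<and> (\<forall>F. F facet_of S \<longrightarrow> (\<exists>h\<in>J. {x\<in>S. a h \<bullet> x = b h} \<subseteq> F)))
        \<or> (\<exists>L j A. simplex_strip_data L j A \<and> S = L -` A \<and>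
              (\<forall>F\<in>strip_faces L A. \<exists>h\<in>J. {x\<in>S. a h \<bullet> x = b h} \<subseteq> F))"
      by (rule circuit_core[OF finJ _ mupos musum injJ indJ anz x0J S_def]) (simp add: J_def)
    have conv: "\<exists>G. G facet_of K \<and> G \<subseteq> F" if exh: "\<exists>h\<in>J. {x\<in>S. a h \<bullet> x = b h} \<subseteq> F" for F
    proof -
      obtain h where hJ: "h \<in> J" and hF: "{x\<in>S. a h \<bullet> x = b h} \<subseteq> F" using exh by blast
      have "K \<inter> {x. a h \<bullet> x = b h} facet_of K" using facK JF hJ by blast
      moreover have "K \<inter> {x. a h \<bullet> x = b h} \<subseteq> F" using KS hF by blast
      ultimately show ?thesis by blast
    qed
    have "P S"
      using core
    proof
      assume H: "int DIM('a) simplex S \<and> (\<forall>F. F facet_of S \<longrightarrow> (\<exists>h\<in>J. {x\<in>S. a h \<bullet> x = b h} \<subseteq> F))"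
      then show "P S" unfolding P_def using conv by blast
    next
      assume "\<exists>L j A. simplex_strip_data L j A \<and> S = L -` A \<and>
              (\<forall>F\<in>strip_faces L A. \<exists>h\<in>J. {x\<in>S. a h \<bullet> x = b h} \<subseteq> F)"
      then obtain L j A where H: "simplex_strip_data L j A" "S = L -` A"
        "\<forall>F\<in>strip_faces L A. \<exists>h\<in>J. {x\<in>S. a h \<bullet> x = b h} \<subseteq> F" by blast
      then have "\<forall>F\<in>strip_faces L A. \<exists>G. G facet_of K \<and> G \<subseteq> F" using conv by blast
      then show "P S" unfolding P_def using H(1,2) by blast
    qed
    then show ?thesis using KS Sh0 by blast
  qed
  then obtain Sf where Sf: "\<forall>h0\<in>\<F>. K \<subseteq> Sf h0 \<and> Sf h0 \<subseteq> {x. a h0 \<bullet> x \<le> b h0} \<and> P (Sf h0)"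
    by metis
  have "K = \<Inter>(Sf ` \<F>)"
  proof
    show "K \<subseteq> \<Inter>(Sf ` \<F>)" using Sf by blast
    show "\<Inter>(Sf ` \<F>) \<subseteq> K"
    proof
      fix x assume "x \<in> \<Inter>(Sf ` \<F>)"
      then have "\<forall>h\<in>\<F>. a h \<bullet> x \<le> b h" using Sf by blast
      then show "x \<in> K" using Kdef by blast
    qed
  qed
  moreover have "finite (Sf ` \<F>)" using finF by simp
  moreover have "\<forall>S\<in>Sf ` \<F>. P S" using Sf by blast
  ultimately show ?thesis unfolding P_def by blast
qed

end
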